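(* Let $H\in\mathbb H$ and assume that $$\lim_{r\to\infty}\operatorname{dist}_{L^1}\big(\rho_1\mathcal A_rH,\ \rho_1\mathcal C\big)=0,$$ where $\operatorname{dist}_{L^1}$ is the distance in $L^1((0,1),\mathbb C^{2\times2})$. Let $$K=\big\{\xi\in\overline{\mathbb C_+}:\ \rho_1\Theta(\xi)\in\operatorname{Cl}_{\|\cdot\|_1}(\rho_1\mathcal A_rH)\big\}.$$ Then (1) for every $T>0$: $\operatorname{Cl}_{\|\cdot\|_1}(\rho_T\mathcal A_rH)=\rho_T\Theta(K)$; and (2) $\operatorname{Cl}(\mathcal A_rH)=\Theta(K)$.
   Context: $\mathbb H$ is the set of measurable $H:(0,\infty)\to\mathbb R^{2\times2}$ with $H(t)\ge0$, $\operatorname{tr}H(t)=1$ a.e., up to a.e. equality, with topology $\mathcal T$: $H_n\to H$ iff $H_n|_{(0,T)}\to H|_{(0,T)}$ weakly in $L^1((0,T),\mathbb C^{2\times2})$ for all $T>0$. $\rho_T H=H|_{(0,T)}$. $(\mathcal A_rH)(t)=H(t/r)$. $\operatorname{Cl}(\mathcal A_rH)=\{\tilde H\in\mathbb H:\exists r_n\to\infty,\ \mathcal A_{r_n}H\to\tilde H\text{ in }\mathcal T\}$, while $\operatorname{Cl}_{\|\cdot\|_1}(\rho_T\mathcal A_rH)=\{G:\exists r_n\to\infty,\ \|\rho_T\mathcal A_{r_n}H-G\|_{L^1((0,T))}\to0\}$, the $L^1$-norm taken w.r.t. the entrywise $\ell^1$-norm on $\mathbb C^{2\times2}$. $\mathcal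 C\subseteq\mathbb H$ is the set of a.e. constant Hamiltonians. $\Theta:\overline{\mathbb C_+}\to\mathcal C$ (with $\overline{\mathbb C_+}=\mathbb C_+\cup\mathbb R\cup\{\infty\}$) is the bijection $\Theta(\zeta)=\frac{1}{|\zeta|^2+1}\begin{pmatrix}|\zeta|^2&\operatorname{Re}\zeta\\\operatorname{Re}\zeta&1\end{pmatrix}$ for $\zeta\ne\infty$, $\Theta(\infty)=\begin{pmatrix}1&0\\0&0\end{pmatrix}$ (as constant functions). *)

theory Defs
  imports "HOL-Analysis.Analysis"
begin

text \<open>2x2 real matrices as real^2^2; Hamiltonians are represented by
  (measurable) representatives of their a.e.-classes.\<close>

definition mtrace :: "real^2^2 \<Rightarrow> real" where
  "mtrace M = M$1$1 + M$2$2"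

definition psd :: "real^2^2 \<Rightarrow> bool" where
  "psd M \<longleftrightarrow> transpose M = M \<and> (\<forall>v::real^2. 0 \<le> v \<bullet> (M *v v))"

definition Ham :: "(real \<Rightarrow> real^2^2) set" where
  "Ham = {H. H \<in> borel_measurable lborel \<and>
              (AE t in lborel. 0 < t \<longrightarrow> psd (H t) \<and> mtrace (H t) = 1)}"

definition ConstHamVals :: "(real^2^2) set" where
  "ConstHamVals = {M. psd M \<and> mtrace M = 1}"

definition resc :: "real \<Rightarrow> (real \<Rightarrow> 'a) \<Rightarrow> real \<Rightarrow> 'a" where
  "resc r H t = H (t / r)"

definition cmat :: "real^2^2 \<Rightarrow> complex^2^2" where
  "cmat M = (\<chi> i j. complex_of_real (M$i$j))"

definition l1norm :: "complex^2^2 \<Rightarrow> real" where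
  "l1norm M = (\<Sum>i\<in>UNIV. \<Sum>j\<in>UNIV. cmod (M$i$j))"

definition L1dist :: "real \<Rightarrow> (real \<Rightarrow> real^2^2) \<Rightarrow> (real \<Rightarrow> complex^2^2) \<Rightarrow> real" where
  "L1dist T H G = (LINT t:{0<..<T}|lborel. l1norm (cmat (H t) - G t))"

definition weak_conv_on :: "real \<Rightarrow> (nat \<Rightarrow> real \<Rightarrow> real^2^2) \<Rightarrow> (real \<Rightarrow> real^2^2) \<Rightarrow> bool" where
  "weak_conv_on T Hs H \<longleftrightarrow>
     (\<forall>g::real \<Rightarrow> complex. g \<in> borel_measurable lborel \<and> bounded (range g) \<longrightarrow>
        (\<forall>i j. (\<lambda>n. LINT t:{0<..<T}|lborel. complex_of_real (Hs n t $i$j) * g t)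
                  \<longlonglongrightarrow> (LINT t:{0<..<T}|lborel. complex_of_real (H t $i$j) * g t)))"

definition T_conv :: "(nat \<Rightarrow> real \<Rightarrow> real^2^2) \<Rightarrow> (real \<Rightarrow> real^2^2) \<Rightarrow> bool" where
  "T_conv Hs H \<longleftrightarrow> (\<forall>T>0. weak_conv_on T Hs H)"

definition ClA :: "(real \<Rightarrow> real^2^2) \<Rightarrow> (real \<Rightarrow> real^2^2) set" where
  "ClA H = {G \<in> Ham. \<exists>r::nat \<Rightarrow> real. filterlim r at_top sequentially \<and>
                        T_conv (\<lambda>n. resc (r n) H) G}"

definition ClL1 :: "real \<Rightarrow> (real \<Rightarrow> real^2^2) \<Rightarrow> (real \<Rightarrow> complex^2^2) set" where
  "ClL1 T H = {G. set_integrable lborel {0<..<T} G \<and>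
      (\<exists>r::nat \<Rightarrow> real. filterlim r at_top sequentially \<and>
          (\<lambda>n. L1dist T (resc (r n) H) G) \<longlonglongrightarrow> 0)}"

definition distC :: "(real \<Rightarrow> real^2^2) \<Rightarrow> real \<Rightarrow> real" where
  "distC H r = (INF M\<in>ConstHamVals. L1dist 1 (resc r H) (\<lambda>_. cmat M))"

text \<open>Closed upper half plane with infinity: \<open>None\<close> is \<open>\<infinity>\<close>.\<close>
definition ClUHP :: "complex option set" where
  "ClUHP = {None} \<union> Some ` {z. 0 \<le> Im z}"

definition Theta :: "complex option \<Rightarrow> real^2^2" where
  "Theta \<xi> = (case \<xi> of
      None \<Rightarrow> (\<chi> i j. if i = 1 \<and> j = 1 then 1 else 0)
    | Some z \<Rightarrow> (\<chi> i j. (1 / ((cmod z)^2 + 1)) *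
         (if i = 1 \<and> j = 1 then (cmod z)^2
          else if i = 2 \<and> j = 2 then 1 else Re z)))"

end

theory Submission
  imports Defs
begin


lemma l1norm_2: "l1norm M = cmod (M$1$1) + cmod (M$1$2) + cmod (M$2$1) + cmod (M$2$2)"
  unfolding l1norm_def by (simp add: sum_2)

lemma l1norm_nonneg: "0 \<le> l1norm M"
  unfolding l1norm_def by (intro sum_nonneg) auto

lemma l1norm_triangle: "l1norm (a + b) \<le> l1norm a + l1norm b"
proof -
  have "l1norm (a + b) = (\<Sum>i\<in>UNIV. \<Sum>j\<in>UNIV. cmod (a$i$j + b$i$j))"
    unfolding l1norm_def by simp
  also have "\<dots> \<le> (\<Sum>i\<in>UNIV. \<Sum>j\<in>UNIV. cmod (a$i$j) + cmod (b$i$j))"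
    by (intro sum_mono norm_triangle_ineq)
  also have "\<dots> = l1norm a + l1norm b"
    unfolding l1norm_def by (simp add: sum.distrib)
  finally show ?thesis .
qed

lemma l1norm_minus_commute: "l1norm (a - b) = l1norm (b - a)"
  unfolding l1norm_2 by (simp add: norm_minus_commute)

lemma l1norm_tri3: "l1norm (a - c) \<le> l1norm (a - b) + l1norm (b - c)"
  using l1norm_triangle[of "a - b" "b - c"] by simp

lemma entry_le_l1norm: "cmod (M$i$j) \<le> l1norm M"
proof -
  have "cmod (M$i$j) \<le> (\<Sum>j\<in>UNIV. cmod (M$i$j))"
    by (rule member_le_sum) auto
  also have "\<dots> \<le> l1norm M" unfolding l1norm_def
    by (rule member_le_sum[where f="\<lambda>i. \<Sum>j\<in>UNIV. cmod (M$i$j)"]) (auto intro: sum_nonneg)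
  finally show ?thesis .
qed

lemma l1norm_le_norm: "l1norm M \<le> 4 * norm M"
proof -
  have e: "\<And>i j. cmod (M$i$j) \<le> norm M"
    by (rule order_trans[OF Finite_Cartesian_Product.norm_nth_le Finite_Cartesian_Product.norm_nth_le])
  have "l1norm M \<le> (\<Sum>i\<in>(UNIV::2 set). \<Sum>j\<in>(UNIV::2 set). norm M)"
    unfolding l1norm_def by (intro sum_mono e)
  also have "\<dots> = 4 * norm M" by simp
  finally show ?thesis .
qed

lemma norm_le_l1norm: "norm M \<le> l1norm M"
proof -
  have "norm M \<le> (\<Sum>i\<in>UNIV. norm (M$i))"
    unfolding norm_vec_def by (rule L2_set_le_sum) auto
  also have "\<dots> \<le> l1norm M" unfolding l1norm_def
  proof (rule sum_mono)
    fix i show "norm (M$i) \<le> (\<Sum>j\<in>UNIV. cmod (M$i$j))"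
      unfolding norm_vec_def by (rule L2_set_le_sum) auto
  qed
  finally show ?thesis .
qed

lemma l1norm_eq0: "l1norm M = 0 \<Longrightarrow> M = 0"
  using norm_le_l1norm[of M] by simp

lemma continuous_l1norm: "continuous_on UNIV l1norm"
  unfolding l1norm_def[abs_def] by (intro continuous_intros)

lemma measurable_l1norm[measurable]: "f \<in> borel_measurable M \<Longrightarrow> (\<lambda>x. l1norm (f x)) \<in> borel_measurable M"
  by (erule measurable_compose[OF _ borel_measurable_continuous_onI[OF continuous_l1norm]])

lemma cmat_diff: "cmat A - cmat B = cmat (A - B)"
  unfolding cmat_def by (simp add: vec_eq_iff)

lemma l1norm_cmat: "l1norm (cmat M) = \<bar>M$1$1\<bar> + \<bar>M$1$2\<bar> + \<bar>M$2$1\<bar> + \<bar>M$2$2\<bar>"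
  unfolding l1norm_2 cmat_def by simp

lemma continuous_cmat: "continuous_on UNIV cmat"
  unfolding cmat_def by (intro continuous_intros)

lemma measurable_cmat[measurable]: "f \<in> borel_measurable M \<Longrightarrow> (\<lambda>x. cmat (f x)) \<in> borel_measurable M"
  by (erule measurable_compose[OF _ borel_measurable_continuous_onI[OF continuous_cmat]])

lemma measurable_vec_nth[measurable]:
  fixes f :: "'c \<Rightarrow> 'a::topological_space^'b"
  assumes "f \<in> borel_measurable M" shows "(\<lambda>x. f x $ i) \<in> borel_measurable M"
proof -
  have "continuous_on UNIV (\<lambda>x::'a^'b. x $ i)" by (intro continuous_intros)
  then show ?thesis
    by (rule measurable_compose[OF assms borel_measurable_continuous_onI])
qed



lemma quad2: "(v::real^2) \<bullet> (M *v v) = v$1 * (M$1$1 * v$1 + M$1$2 * v$2) + v$2 * (M$2$1 * v$1 + M$2$2 * v$2)"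
  by (simp add: inner_vec_def matrix_vector_mult_def sum_2)

lemma transpose_eq2: "transpose (M::real^2^2) = M \<longleftrightarrow> M$1$2 = M$2$1"
  by (auto simp: transpose_def vec_eq_iff forall_2)

lemma vec2_ex: "\<exists>v::real^2. v$1 = x \<and> v$2 = y"
  by (rule exI[of _ "vector [x, y]"]) simp

lemma quad_pos:
  fixes a b d x y :: real
  assumes "0 \<le> a" "0 \<le> d" "b^2 \<le> a * d"
  shows "0 \<le> a*x^2 + 2*b*x*y + d*y^2"
proof (cases "a = 0")
  case True
  then have "b = 0" using assms by simp
  then show ?thesis using True assms by simp
next
  case False
  then have ap: "a > 0" using assms by simp
  have "a * (a*x^2 + 2*b*x*y + d*y^2) = (a*x + b*y)^2 + (a*d - b^2)*y^2"
    by (simp add: algebra_simps power2_eq_square)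
  also have "\<dots> \<ge> 0" using assms by (intro add_nonneg_nonneg mult_nonneg_nonneg) auto
  finally show ?thesis using ap by (simp add: zero_le_mult_iff)
qed

lemma CHV_iff: "M \<in> ConstHamVals \<longleftrightarrow>
   M$1$2 = M$2$1 \<and> 0 \<le> M$1$1 \<and> 0 \<le> M$2$2 \<and> M$1$1 + M$2$2 = 1 \<and> (M$1$2)^2 \<le> M$1$1 * M$2$2"
  (is "?L \<longleftrightarrow> ?R")
proof
  assume L: ?L
  then have sym: "M$1$2 = M$2$1" and tr: "M$1$1 + M$2$2 = 1"
    and q: "\<And>v. 0 \<le> v \<bullet> (M *v v)"
    by (auto simp: ConstHamVals_def psd_def transpose_eq2 mtrace_def)
  have Q: "\<And>x y. 0 \<le> x * (M$1$1 * x + M$1$2 * y) + y * (M$2$1 * x + M$2$2 * y)"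
  proof -
    fix x y
    obtain v :: "real^2" where "v$1 = x" "v$2 = y" using vec2_ex by blast
    then show "0 \<le> x * (M$1$1 * x + M$1$2 * y) + y * (M$2$1 * x + M$2$2 * y)"
      using q[of v] by (simp add: quad2)
  qed
  have a: "0 \<le> M$1$1" using Q[of 1 0] by simp
  have d: "0 \<le> M$2$2" using Q[of 0 1] by simp
  have 1: "0 \<le> M$1$1 * (M$1$1 * M$2$2 - (M$1$2)^2)"
    using Q[of "M$1$2" "- M$1$1"] sym by (simp add: algebra_simps power2_eq_square)
  have 2: "0 \<le> M$2$2 * (M$1$1 * M$2$2 - (M$1$2)^2)"
    using Q[of "M$2$2" "- M$1$2"] sym by (simp add: algebra_simps power2_eq_square)
  have "0 < M$1$1 \<or> 0 < M$2$2" using a d tr by linarith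
  then have "0 \<le> M$1$1 * M$2$2 - (M$1$2)^2"
    using 1 2 by (auto simp: zero_le_mult_iff)
  then show ?R using sym tr a d by simp
next
  assume R: ?R
  have "\<And>v::real^2. 0 \<le> v \<bullet> (M *v v)"
  proof -
    fix v :: "real^2"
    have "0 \<le> M$1$1*(v$1)^2 + 2*(M$1$2)*(v$1)*(v$2) + M$2$2*(v$2)^2"
      using R by (intro quad_pos) auto
    then show "0 \<le> v \<bullet> (M *v v)" using R
      by (simp add: quad2 algebra_simps power2_eq_square)
  qed
  then show ?L using R by (simp add: ConstHamVals_def psd_def transpose_eq2 mtrace_def)
qed

lemma CHV_entry_bound: "M \<in> ConstHamVals \<Longrightarrow> \<bar>M$i$j\<bar> \<le> 1"
proof -
  assume "M \<in> ConstHamVals"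
  then have R: "M$1$2 = M$2$1" "0 \<le> M$1$1" "0 \<le> M$2$2" "M$1$1 + M$2$2 = 1" "(M$1$2)^2 \<le> M$1$1 * M$2$2"
    by (auto simp: CHV_iff)
  have "M$1$1 * M$2$2 \<le> 1 * 1" using R by (intro mult_mono) auto
  then have "(M$1$2)^2 \<le> 1" using R by simp
  then have "\<bar>M$1$2\<bar> \<le> 1" by (simp add: abs_square_le_1)
  then show ?thesis using R exhaust_2[of i] exhaust_2[of j] by auto
qed

lemma l1norm_cmat_CHV: "M \<in> ConstHamVals \<Longrightarrow> l1norm (cmat M) \<le> 4"
proof -
  assume "M \<in> ConstHamVals"
  then have "\<And>i j. \<bar>M$i$j\<bar> \<le> 1" using CHV_entry_bound by blast
  then have "\<bar>M$1$1\<bar> \<le> 1" "\<bar>M$1$2\<bar> \<le> 1" "\<bar>M$2$1\<bar> \<le> 1" "\<bar>M$2$2\<bar> \<le> 1" by auto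
  then show ?thesis unfolding l1norm_cmat by linarith
qed

lemma CHV_nonempty: "Theta None \<in> ConstHamVals"
  by (simp add: CHV_iff Theta_def)

lemma Theta_surj: assumes "M \<in> ConstHamVals" shows "\<exists>\<xi>\<in>ClUHP. Theta \<xi> = M"
proof -
  have R: "M$1$2 = M$2$1" "0 \<le> M$1$1" "0 \<le> M$2$2" "M$1$1 + M$2$2 = 1" "(M$1$2)^2 \<le> M$1$1 * M$2$2"
    using assms by (auto simp: CHV_iff)
  define a where "a = M$1$1"
  define b where "b = M$1$2"
  define d where "d = M$2$2"
  show ?thesis
  proof (cases "d = 0")
    case True
    then have "a = 1" "b = 0" using R unfolding a_def b_def d_def by auto
    then have "Theta None = M" using True R unfolding a_def b_def d_def
      by (auto simp: Theta_def vec_eq_iff forall_2)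
    then show ?thesis by (auto simp: ClUHP_def)
  next
    case False
    then have dp: "d > 0" using R d_def by simp
    define w where "w = a/d - (b/d)^2"
    have w: "0 \<le> w"
    proof -
      have "w = (a*d - b^2)/d^2" unfolding w_def using dp by (simp add: field_simps power2_eq_square)
      then show ?thesis using R unfolding a_def b_def d_def by simp
    qed
    define z where "z = Complex (b/d) (sqrt w)"
    have cz: "(cmod z)^2 = a/d" unfolding z_def cmod_power2 using w by (simp add: w_def)
    have den: "(cmod z)^2 + 1 = 1/d" using cz dp R unfolding a_def d_def
      by (simp add: field_simps)
    have Rez: "Re z = b/d" by (simp add: z_def)
    have e11: "(1/((cmod z)^2+1)) * (cmod z)^2 = a" using den cz dp by simp
    have e22: "(1/((cmod z)^2+1)) * 1 = d" using den by simp
    have e12: "(1/((cmod z)^2+1)) * Re z = b" using den Rez dp by simp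
    have t11: "Theta (Some z) $1$1 = a" unfolding Theta_def using e11 by simp
    have t22: "Theta (Some z) $2$2 = d" unfolding Theta_def using e22 by simp
    have t12: "Theta (Some z) $1$2 = b" unfolding Theta_def using e12 by simp
    have t21: "Theta (Some z) $2$1 = b" unfolding Theta_def using e12 by simp
    have "Theta (Some z) = M"
      unfolding vec_eq_iff forall_2 using t11 t12 t21 t22 R(1) unfolding a_def b_def d_def by simp
    moreover have "Some z \<in> ClUHP" using w unfolding ClUHP_def z_def by auto
    ultimately show ?thesis by blast
  qed
qed

lemma norm_le_sum2: "norm (M::'a::real_normed_vector^'n^'m) \<le> (\<Sum>i\<in>UNIV. \<Sum>j\<in>UNIV. norm (M$i$j))"
proof -
  have "norm M \<le> (\<Sum>i\<in>UNIV. norm (M$i))"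
    unfolding norm_vec_def by (rule L2_set_le_sum) auto
  also have "\<dots> \<le> (\<Sum>i\<in>UNIV. \<Sum>j\<in>UNIV. norm (M$i$j))"
  proof (rule sum_mono)
    fix i show "norm (M$i) \<le> (\<Sum>j\<in>UNIV. norm (M$i$j))"
      unfolding norm_vec_def by (rule L2_set_le_sum) auto
  qed
  finally show ?thesis .
qed

lemma CHV_compact: "compact ConstHamVals"
  unfolding compact_eq_bounded_closed
proof
  show "bounded ConstHamVals"
    unfolding bounded_iff
  proof (intro exI ballI)
    fix M assume "M \<in> ConstHamVals"
    then have "\<And>i j. norm (M$i$j) \<le> 1" using CHV_entry_bound by simp
    then have "(\<Sum>i\<in>(UNIV::2 set). \<Sum>j\<in>(UNIV::2 set). norm (M$i$j)) \<le> (\<Sum>i\<in>(UNIV::2 set). \<Sum>j\<in>(UNIV::2 set). 1)"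
      by (intro sum_mono)
    then show "norm M \<le> 4" using norm_le_sum2[of M] by simp
  qed
  have e: "ConstHamVals = {M. M$1$2 = M$2$1} \<inter> {M. 0 \<le> M$1$1} \<inter> {M. 0 \<le> M$2$2} \<inter>
      {M. M$1$1 + M$2$2 = 1} \<inter> {M. (M$1$2)^2 \<le> M$1$1 * M$2$2}"
    by (auto simp: CHV_iff)
  show "closed ConstHamVals" unfolding e
    by (intro closed_Int closed_Collect_eq closed_Collect_le continuous_intros)
qed



lemma Ham_AE: "H \<in> Ham \<Longrightarrow> AE t in lborel. 0 < t \<longrightarrow> H t \<in> ConstHamVals"
  unfolding Ham_def ConstHamVals_def by auto

lemma Ham_meas: "H \<in> Ham \<Longrightarrow> H \<in> borel_measurable lborel"
  unfolding Ham_def by auto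

lemma Ham_resc_AE:
  assumes "H \<in> Ham" "r > 0"
  shows "AE t in lborel. 0 < t \<longrightarrow> resc r H t \<in> ConstHamVals"
proof -
  from Ham_AE[OF assms(1)] obtain N where N: "{t \<in> space lborel. \<not> (0 < t \<longrightarrow> H t \<in> ConstHamVals)} \<subseteq> N"
    "N \<in> null_sets lborel"
  proof -
    from Ham_AE[OF assms(1)] obtain N where "{x \<in> space lborel. \<not> (0 < x \<longrightarrow> H x \<in> ConstHamVals)} \<subseteq> N"
      "emeasure lborel N = 0" "N \<in> sets lborel" by (rule AE_E)
    moreover have "N \<in> null_sets lborel" by (rule null_setsI) fact+
    ultimately show ?thesis using that[of N] by simp
  qed
  have Ns: "N \<in> sets borel" using N(2) by (auto dest: null_setsD2)
  have "AE x in lborel. x \<notin> N" using N(2) by (rule AE_not_in)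
  then have "AE x in lborel. 0 + (1/r) * x \<notin> N"
    using assms(2) Ns by (intro AE_borel_affine) auto
  then show ?thesis
  proof (rule AE_mp, intro AE_I2 impI)
    fix x assume "0 + (1/r) * x \<notin> N" "0 < x"
    then have "x/r \<notin> N" "0 < x/r" using assms(2) by auto
    then show "resc r H x \<in> ConstHamVals" using N(1) unfolding resc_def by auto
  qed
qed

lemma resc_meas[measurable]: "H \<in> Ham \<Longrightarrow> resc r H \<in> borel_measurable lborel"
  unfolding resc_def using Ham_meas[of H]
  by (intro measurable_compose[where f="\<lambda>t. t / r" and g=H]) auto

lemma set_integrable_bdd:
  fixes F :: "real \<Rightarrow> 'b::{banach, second_countable_topology}"
  assumes "F \<in> borel_measurable lborel" "T > 0"
    and "AE t in lborel. t \<in> {0<..<T} \<longrightarrow> norm (F t) \<le> B"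
  shows "set_integrable lborel {0<..<T} F"
  unfolding set_integrable_def
  using assms by (intro integrableI_bounded_set_indicator) auto

lemma SI_resc:
  assumes "H \<in> Ham" "r > 0" "T > 0"
  shows "set_integrable lborel {0<..<T} (\<lambda>t. cmat (resc r H t))"
proof (rule set_integrable_bdd[where B=4])
  show "(\<lambda>t. cmat (resc r H t)) \<in> borel_measurable lborel" using assms by measurable
  show "AE t in lborel. t \<in> {0<..<T} \<longrightarrow> norm (cmat (resc r H t)) \<le> 4"
    using Ham_resc_AE[OF assms(1,2)]
  proof (rule AE_mp, intro AE_I2 impI)
    fix t assume "0 < t \<longrightarrow> resc r H t \<in> ConstHamVals" "t \<in> {0<..<T}"
    then show "norm (cmat (resc r H t)) \<le> 4"
      using l1norm_cmat_CHV norm_le_l1norm order_trans by fastforce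
  qed
qed (use assms in auto)

lemma SI_const: "(T::real) > 0 \<Longrightarrow> set_integrable lborel {0<..<T} (\<lambda>_. c::'b::{banach, second_countable_topology})"
  using set_integrable_bdd[where F="\<lambda>_. c" and T=T and B="norm c"] by auto

lemma SI_l1:
  fixes F :: "'z \<Rightarrow> complex^2^2"
  assumes "set_integrable M A F"
  shows "set_integrable M A (\<lambda>t. l1norm (F t))"
  unfolding set_integrable_def
proof (rule Bochner_Integration.integrable_bound[where f="\<lambda>x. 4 *\<^sub>R (indicator A x *\<^sub>R F x)"])
  show "integrable M (\<lambda>x. 4 *\<^sub>R (indicator A x *\<^sub>R F x))"
    using assms unfolding set_integrable_def by (intro integrable_scaleR_right)
  have "(\<lambda>x. indicator A x *\<^sub>R F x) \<in> borel_measurable M"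
    using assms unfolding set_integrable_def by (rule borel_measurable_integrable)
  then have "(\<lambda>x. l1norm (indicator A x *\<^sub>R F x)) \<in> borel_measurable M" by measurable
  moreover have "\<And>x. l1norm (indicator A x *\<^sub>R F x) = indicator A x *\<^sub>R l1norm (F x)"
    by (simp add: indicator_def l1norm_def)
  ultimately show "(\<lambda>x. indicat_real A x *\<^sub>R l1norm (F x)) \<in> borel_measurable M" by simp
  show "AE x in M. norm (indicat_real A x *\<^sub>R l1norm (F x)) \<le> norm (4 *\<^sub>R (indicat_real A x *\<^sub>R F x))"
    using l1norm_le_norm l1norm_nonneg by (intro AE_I2) (auto simp: indicator_def)
qed

lemma SI_l1_diff:
  fixes F G :: "'a \<Rightarrow> complex^2^2"
  assumes "set_integrable M A F" "set_integrable M A G"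
  shows "set_integrable M A (\<lambda>t. l1norm (F t - G t))"
  using assms by (intro SI_l1 set_integral_diff(1))

lemma L1dist_nonneg: "0 \<le> L1dist T H G"
  unfolding L1dist_def set_lebesgue_integral_def
  by (intro integral_nonneg_AE AE_I2) (auto simp: l1norm_nonneg indicator_def)

lemma set_int_nonneg_l1: "0 \<le> (LINT t:A|M. l1norm (F t))"
  unfolding set_lebesgue_integral_def
  by (intro integral_nonneg_AE AE_I2) (auto simp: l1norm_nonneg indicator_def)

lemma L1dist_scale:
  assumes "T > 0"
  shows "L1dist T (resc (T*r) H) (\<lambda>_. c) = T * L1dist 1 (resc r H) (\<lambda>_. c)"
proof -
  have "L1dist T (resc (T*r) H) (\<lambda>_. c) =
     (\<integral>t. indicator {0<..<T} t *\<^sub>R l1norm (cmat (H (t / (T*r))) - c) \<partial>lborel)"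
    unfolding L1dist_def set_lebesgue_integral_def resc_def by simp
  also have "\<dots> = \<bar>T\<bar> *\<^sub>R (\<integral>x. indicator {0<..<T} (0 + T*x) *\<^sub>R l1norm (cmat (H ((0 + T*x) / (T*r))) - c) \<partial>lborel)"
    by (rule lborel_integral_real_affine[where f="\<lambda>t. indicator {0<..<T} t *\<^sub>R l1norm (cmat (H (t / (T*r))) - c)" and t=0 and c=T]) (use assms in simp)
  also have "(\<lambda>x. indicator {0<..<T} (0 + T*x) *\<^sub>R l1norm (cmat (H ((0 + T*x) / (T*r))) - c))
      = (\<lambda>x. indicator {0<..<1} x *\<^sub>R l1norm (cmat (H (x / r)) - c))"
  proof
    fix x
    have "indicator {0<..<T} (0 + T*x) = (indicator {0<..<1} x :: real)"
      using assms by (auto simp: indicator_def zero_less_mult_iff mult_less_cancel_left1)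
    moreover have "(0 + T*x) / (T*r) = x / r" using assms by simp
    ultimately show "indicator {0<..<T} (0 + T*x) *\<^sub>R l1norm (cmat (H ((0 + T*x) / (T*r))) - c)
      = indicator {0<..<1} x *\<^sub>R l1norm (cmat (H (x / r)) - c)" by simp
  qed
  finally show ?thesis using assms
    unfolding L1dist_def set_lebesgue_integral_def resc_def by simp
qed

lemma set_int_tri:
  fixes F G1 G2 :: "'a \<Rightarrow> complex^2^2"
  assumes "set_integrable M A F" "set_integrable M A G1" "set_integrable M A G2"
  shows "(LINT x:A|M. l1norm (G1 x - G2 x)) \<le> (LINT x:A|M. l1norm (F x - G1 x)) + (LINT x:A|M. l1norm (F x - G2 x))"
proof -
  have i1: "set_integrable M A (\<lambda>x. l1norm (F x - G1 x))" using assms by (intro SI_l1_diff)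
  have i2: "set_integrable M A (\<lambda>x. l1norm (F x - G2 x))" using assms by (intro SI_l1_diff)
  have "(LINT x:A|M. l1norm (G1 x - G2 x)) \<le> (LINT x:A|M. l1norm (F x - G1 x) + l1norm (F x - G2 x))"
  proof (rule set_integral_mono)
    show "set_integrable M A (\<lambda>x. l1norm (G1 x - G2 x))" using assms by (intro SI_l1_diff)
    show "set_integrable M A (\<lambda>x. l1norm (F x - G1 x) + l1norm (F x - G2 x))"
      using i1 i2 by (rule set_integral_add(1))
    fix x show "l1norm (G1 x - G2 x) \<le> l1norm (F x - G1 x) + l1norm (F x - G2 x)"
      using l1norm_tri3[of "G1 x" "G2 x" "F x"] l1norm_minus_commute[of "G1 x" "F x"] by simp
  qed
  also have "\<dots> = (LINT x:A|M. l1norm (F x - G1 x)) + (LINT x:A|M. l1norm (F x - G2 x))"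
    using i1 i2 by (rule set_integral_add(2))
  finally show ?thesis .
qed

lemma set_int_const_l1:
  "T > 0 \<Longrightarrow> (LINT x:{0<..<T}|lborel. l1norm ((c1::complex^2^2) - c2)) = T * l1norm (c1 - c2)"
  by (simp add: set_integral_const)

lemma set_int_mono_dom:
  fixes F :: "real \<Rightarrow> complex^2^2"
  assumes "set_integrable lborel {0<..<T} F" "0 < S" "S \<le> T"
  shows "(LINT x:{0<..<S}|lborel. l1norm (F x)) \<le> (LINT x:{0<..<T}|lborel. l1norm (F x))"
proof -
  have i: "set_integrable lborel {0<..<T} (\<lambda>x. l1norm (F x))" using assms(1) by (rule SI_l1)
  have i2: "set_integrable lborel {0<..<S} (\<lambda>x. l1norm (F x))"
    by (rule set_integrable_subset[OF i]) (use assms in auto)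
  show ?thesis using i i2 unfolding set_lebesgue_integral_def set_integrable_def
    using assms by (intro integral_mono) (auto simp: indicator_def l1norm_nonneg)
qed



lemma set_int_tri2:
  fixes F G1 G2 :: "'a \<Rightarrow> complex^2^2"
  assumes "set_integrable M A F" "set_integrable M A G1" "set_integrable M A G2"
  shows "(LINT x:A|M. l1norm (G1 x - G2 x)) \<le> (LINT x:A|M. l1norm (G1 x - F x)) + (LINT x:A|M. l1norm (F x - G2 x))"
proof -
  have i1: "set_integrable M A (\<lambda>x. l1norm (G1 x - F x))" using assms by (intro SI_l1_diff)
  have i2: "set_integrable M A (\<lambda>x. l1norm (F x - G2 x))" using assms by (intro SI_l1_diff)
  have "(LINT x:A|M. l1norm (G1 x - G2 x)) \<le> (LINT x:A|M. l1norm (G1 x - F x) + l1norm (F x - G2 x))"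
  proof (rule set_integral_mono)
    show "set_integrable M A (\<lambda>x. l1norm (G1 x - G2 x))" using assms by (intro SI_l1_diff)
    show "set_integrable M A (\<lambda>x. l1norm (G1 x - F x) + l1norm (F x - G2 x))"
      using i1 i2 by (rule set_integral_add(1))
    fix x show "l1norm (G1 x - G2 x) \<le> l1norm (G1 x - F x) + l1norm (F x - G2 x)"
      by (rule l1norm_tri3)
  qed
  also have "\<dots> = (LINT x:A|M. l1norm (G1 x - F x)) + (LINT x:A|M. l1norm (F x - G2 x))"
    using i1 i2 by (rule set_integral_add(2))
  finally show ?thesis .
qed

lemma ev_pos: "filterlim r at_top sequentially \<Longrightarrow> eventually (\<lambda>n. (r n::real) > 0) sequentially"
  by (rule eventually_compose_filterlim[OF eventually_gt_at_top])

lemma filterlim_div_pos: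
  assumes "filterlim r at_top sequentially" "(T::real) > 0"
  shows "filterlim (\<lambda>n. r n / T) at_top sequentially"
  unfolding filterlim_at_top
proof
  fix Z
  have "eventually (\<lambda>n. Z * T \<le> r n) sequentially"
    using assms(1) unfolding filterlim_at_top by blast
  then show "eventually (\<lambda>n. Z \<le> r n / T) sequentially"
    by eventually_elim (use assms(2) in \<open>simp add: pos_le_divide_eq\<close>)
qed

lemma filterlim_mult_pos:
  assumes "filterlim r at_top sequentially" "(T::real) > 0"
  shows "filterlim (\<lambda>n. T * r n) at_top sequentially"
  using filterlim_div_pos[OF assms(1), of "1/T"] assms(2) by (simp add: mult.commute)

lemma near_const:
  assumes dist: "(distC H \<longlongrightarrow> 0) at_top" and T: "T > 0" and r: "filterlim r at_top sequentially"
  shows "\<exists>M. (\<forall>n. M n \<in> ConstHamVals) \<and> (\<lambda>n. L1dist T (resc (r n) H) (\<lambda>_. cmat (M n))) \<longlonglongrightarrow> 0"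
proof -
  define s where "s n = r n / T" for n
  have s: "filterlim s at_top sequentially" unfolding s_def using r T by (rule filterlim_div_pos)
  have d: "(\<lambda>n. distC H (s n)) \<longlonglongrightarrow> 0" using filterlim_compose[OF dist s] .
  have bdd: "bdd_below ((\<lambda>M. L1dist 1 (resc x H) (\<lambda>_. cmat M)) ` ConstHamVals)" for x
    by (rule bdd_belowI[where m=0]) (auto simp: L1dist_nonneg)
  have "\<forall>n. \<exists>M. M \<in> ConstHamVals \<and> L1dist 1 (resc (s n) H) (\<lambda>_. cmat M) < distC H (s n) + inverse (real (Suc n))"
  proof
    fix n
    have "distC H (s n) < distC H (s n) + inverse (real (Suc n))" by simp
    then show "\<exists>M. M \<in> ConstHamVals \<and> L1dist 1 (resc (s n) H) (\<lambda>_. cmat M) < distC H (s n) + inverse (real (Suc n))"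
      unfolding distC_def using cINF_less_iff[OF _ bdd] CHV_nonempty by blast
  qed
  then obtain M where M: "\<And>n. M n \<in> ConstHamVals"
    "\<And>n. L1dist 1 (resc (s n) H) (\<lambda>_. cmat (M n)) < distC H (s n) + inverse (real (Suc n))"
    by metis
  have eq: "L1dist T (resc (r n) H) (\<lambda>_. cmat (M n)) = T * L1dist 1 (resc (s n) H) (\<lambda>_. cmat (M n))" for n
  proof -
    have "r n = T * s n" unfolding s_def using T by simp
    then show ?thesis using L1dist_scale[OF T, of "s n" H] by simp
  qed
  have "(\<lambda>n. L1dist T (resc (r n) H) (\<lambda>_. cmat (M n))) \<longlonglongrightarrow> 0"
  proof (rule tendsto_sandwich[where f="\<lambda>_. 0" and h="\<lambda>n. T * (distC H (s n) + inverse (real (Suc n)))"])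
    show "\<forall>\<^sub>F n in sequentially. 0 \<le> L1dist T (resc (r n) H) (\<lambda>_. cmat (M n))"
      by (simp add: L1dist_nonneg)
    show "\<forall>\<^sub>F n in sequentially. L1dist T (resc (r n) H) (\<lambda>_. cmat (M n)) \<le> T * (distC H (s n) + inverse (real (Suc n)))"
      unfolding eq using M(2) T by (intro always_eventually allI) (simp add: less_imp_le)
    have "(\<lambda>n. T * (distC H (s n) + inverse (real (Suc n)))) \<longlonglongrightarrow> T * (0 + 0)"
      by (intro tendsto_intros d LIMSEQ_inverse_real_of_nat)
    then show "(\<lambda>n. T * (distC H (s n) + inverse (real (Suc n)))) \<longlonglongrightarrow> 0" by simp
  qed simp
  then show ?thesis using M(1) by blast
qed

lemma cmat_lim:
  assumes "X \<longlonglongrightarrow> M"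
  shows "(\<lambda>n. l1norm (cmat (X n) - cmat M)) \<longlonglongrightarrow> 0"
proof -
  have c: "continuous_on UNIV (\<lambda>x. l1norm (cmat x - cmat M))"
    using continuous_on_compose2[OF continuous_l1norm continuous_on_diff[OF continuous_cmat continuous_on_const]]
    by auto
  have "(\<lambda>n. l1norm (cmat (X n) - cmat M)) \<longlonglongrightarrow> l1norm (cmat M - cmat M)"
    by (rule continuous_on_tendsto_compose[OF c assms]) auto
  then show ?thesis by (simp add: l1norm_def)
qed

lemma L1dist_transfer:
  assumes H: "H \<in> Ham" and T: "T > 0" and rp: "r > 0"
  shows "L1dist T (resc r H) (\<lambda>_. cmat M) \<le> L1dist T (resc r H) (\<lambda>_. cmat M') + T * l1norm (cmat M' - cmat M)"
proof -
  have "L1dist T (resc r H) (\<lambda>_. cmat M) \<le> L1dist T (resc r H) (\<lambda>_. cmat M') +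
      (LINT x:{0<..<T}|lborel. l1norm (cmat M' - cmat M))"
    unfolding L1dist_def
    by (rule set_int_tri2[OF SI_const[OF T] SI_resc[OF H rp T] SI_const[OF T]])
  then show ?thesis using set_int_const_l1[OF T] by simp
qed

lemma near_const_sub:
  assumes H: "H \<in> Ham" and dist: "(distC H \<longlongrightarrow> 0) at_top" and T: "T > 0"
    and r: "filterlim r at_top sequentially"
  shows "\<exists>M\<in>ConstHamVals. \<exists>\<phi>. strict_mono \<phi> \<and> (\<lambda>n. L1dist T (resc (r (\<phi> n)) H) (\<lambda>_. cmat M)) \<longlonglongrightarrow> 0"
proof -
  obtain X where X: "\<And>n. X n \<in> ConstHamVals" "(\<lambda>n. L1dist T (resc (r n) H) (\<lambda>_. cmat (X n))) \<longlonglongrightarrow> 0"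
    using near_const[OF dist T r] by blast
  obtain M \<phi> where M: "M \<in> ConstHamVals" "strict_mono \<phi>" "(X \<circ> \<phi>) \<longlonglongrightarrow> M"
    using seq_compactE[OF compact_imp_seq_compact[OF CHV_compact]] X(1) by metis
  have a: "(\<lambda>n. L1dist T (resc (r (\<phi> n)) H) (\<lambda>_. cmat (X (\<phi> n)))) \<longlonglongrightarrow> 0"
    using LIMSEQ_subseq_LIMSEQ[OF X(2) M(2)] by (simp add: o_def)
  have b: "(\<lambda>n. l1norm (cmat (X (\<phi> n)) - cmat M)) \<longlonglongrightarrow> 0"
    using cmat_lim[OF M(3)] by (simp add: o_def)
  have rp: "eventually (\<lambda>n. r (\<phi> n) > 0) sequentially"
    using ev_pos[OF filterlim_compose[OF r filterlim_subseq[OF M(2)]]] .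
  have "(\<lambda>n. L1dist T (resc (r (\<phi> n)) H) (\<lambda>_. cmat M)) \<longlonglongrightarrow> 0"
  proof (rule tendsto_sandwich[where f="\<lambda>_. 0" and h="\<lambda>n. L1dist T (resc (r (\<phi> n)) H) (\<lambda>_. cmat (X (\<phi> n))) + T * l1norm (cmat (X (\<phi> n)) - cmat M)"])
    show "\<forall>\<^sub>F n in sequentially. 0 \<le> L1dist T (resc (r (\<phi> n)) H) (\<lambda>_. cmat M)"
      by (simp add: L1dist_nonneg)
    show "\<forall>\<^sub>F n in sequentially. L1dist T (resc (r (\<phi> n)) H) (\<lambda>_. cmat M) \<le> L1dist T (resc (r (\<phi> n)) H) (\<lambda>_. cmat (X (\<phi> n))) + T * l1norm (cmat (X (\<phi> n)) - cmat M)"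
      using rp by eventually_elim (rule L1dist_transfer[OF H T])
    have "(\<lambda>n. L1dist T (resc (r (\<phi> n)) H) (\<lambda>_. cmat (X (\<phi> n))) + T * l1norm (cmat (X (\<phi> n)) - cmat M)) \<longlonglongrightarrow> 0 + T * 0"
      by (intro tendsto_intros a b)
    then show "(\<lambda>n. L1dist T (resc (r (\<phi> n)) H) (\<lambda>_. cmat (X (\<phi> n))) + T * l1norm (cmat (X (\<phi> n)) - cmat M)) \<longlonglongrightarrow> 0"
      by simp
  qed simp
  then show ?thesis using M by blast
qed



lemma SI_meas:
  "set_integrable M A G \<Longrightarrow> (\<lambda>t. indicator A t *\<^sub>R G t) \<in> borel_measurable M"
  unfolding set_integrable_def by (rule borel_measurable_integrable)

lemma L1dist_cong:
  assumes H: "H \<in> Ham" and G: "set_integrable lborel {0<..<T} G"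
    and ae: "AE t in lborel. t \<in> {0<..<T} \<longrightarrow> G t = c"
  shows "L1dist T (resc r H) G = L1dist T (resc r H) (\<lambda>_. c)"
  unfolding L1dist_def set_lebesgue_integral_def
proof (rule integral_cong_AE)
  have e: "\<And>t F. indicator {0<..<T} t *\<^sub>R l1norm (cmat (resc r H t) - F t) =
     l1norm (indicator {0<..<T} t *\<^sub>R cmat (resc r H t) - indicator {0<..<T} t *\<^sub>R F t)"
    by (simp add: indicator_def l1norm_def)
  have m1: "(\<lambda>t. indicator {0<..<T} t *\<^sub>R G t) \<in> borel_measurable lborel" using SI_meas[OF G] .
  have m2: "(\<lambda>t. indicator {0<..<T} t *\<^sub>R cmat (resc r H t)) \<in> borel_measurable lborel"
    using resc_meas[OF H, of r] by measurable
  have m3: "(\<lambda>t. indicator {0<..<T} t *\<^sub>R c) \<in> borel_measurable lborel"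
    by (rule borel_measurable_scaleR) auto
  show "(\<lambda>t. indicat_real {0<..<T} t *\<^sub>R l1norm (cmat (resc r H t) - G t)) \<in> borel_measurable lborel"
    unfolding e using m1 m2 by measurable
  show "(\<lambda>t. indicat_real {0<..<T} t *\<^sub>R l1norm (cmat (resc r H t) - c)) \<in> borel_measurable lborel"
  proof -
    have e2: "\<And>t. indicator {0<..<T} t *\<^sub>R l1norm (cmat (resc r H t) - c) =
       l1norm (indicator {0<..<T} t *\<^sub>R cmat (resc r H t) - indicator {0<..<T} t *\<^sub>R c)"
      by (simp add: indicator_def l1norm_def)
    show ?thesis unfolding e2 using m2 m3 by measurable
  qed
  show "AE t in lborel. indicat_real {0<..<T} t *\<^sub>R l1norm (cmat (resc r H t) - G t) =
      indicat_real {0<..<T} t *\<^sub>R l1norm (cmat (resc r H t) - c)"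
    using ae by eventually_elim (auto simp: indicator_def)
qed

lemma P1_bwd:
  assumes H: "H \<in> Ham" and T: "T > 0" and G: "set_integrable lborel {0<..<T} G"
    and c1: "(\<lambda>_. c) \<in> ClL1 1 H"
    and ae: "AE t in lborel. t \<in> {0<..<T} \<longrightarrow> G t = c"
  shows "G \<in> ClL1 T H"
proof -
  obtain r where r: "filterlim r at_top sequentially"
    and D: "(\<lambda>n. L1dist 1 (resc (r n) H) (\<lambda>_. c)) \<longlonglongrightarrow> 0"
    using c1 unfolding ClL1_def by blast
  have "(\<lambda>n. L1dist T (resc (T * r n) H) G) \<longlonglongrightarrow> 0"
  proof -
    have "(\<lambda>n. T * L1dist 1 (resc (r n) H) (\<lambda>_. c)) \<longlonglongrightarrow> T * 0" by (intro tendsto_intros D)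
    moreover have "L1dist T (resc (T * r n) H) G = T * L1dist 1 (resc (r n) H) (\<lambda>_. c)" for n
      using L1dist_cong[OF H G ae] L1dist_scale[OF T] by simp
    ultimately show ?thesis by simp
  qed
  then show ?thesis unfolding ClL1_def using G filterlim_mult_pos[OF r T] by blast
qed

lemma P1_fwd:
  assumes H: "H \<in> Ham" and dist: "(distC H \<longlongrightarrow> 0) at_top" and T: "T > 0" and G: "G \<in> ClL1 T H"
  shows "\<exists>M\<in>ConstHamVals. (AE t in lborel. t \<in> {0<..<T} \<longrightarrow> G t = cmat M) \<and> (\<lambda>_. cmat M) \<in> ClL1 1 H"
proof -
  obtain r where SG: "set_integrable lborel {0<..<T} G" and r: "filterlim r at_top sequentially"
    and D: "(\<lambda>n. L1dist T (resc (r n) H) G) \<longlonglongrightarrow> 0"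
    using G unfolding ClL1_def by blast
  obtain M \<phi> where M: "M \<in> ConstHamVals" "strict_mono \<phi>"
    and E: "(\<lambda>n. L1dist T (resc (r (\<phi> n)) H) (\<lambda>_. cmat M)) \<longlonglongrightarrow> 0"
    using near_const_sub[OF H dist T r] by blast
  have D': "(\<lambda>n. L1dist T (resc (r (\<phi> n)) H) G) \<longlonglongrightarrow> 0"
    using LIMSEQ_subseq_LIMSEQ[OF D M(2)] by (simp add: o_def)
  have rphi: "filterlim (\<lambda>n. r (\<phi> n)) at_top sequentially"
    using filterlim_compose[OF r filterlim_subseq[OF M(2)]] .
  have rp: "eventually (\<lambda>n. r (\<phi> n) > 0) sequentially" using ev_pos[OF rphi] .
  define I where "I = (LINT t:{0<..<T}|lborel. l1norm (cmat M - G t))"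
  have "I \<le> 0 + 0"
  proof (rule tendsto_le[OF _ tendsto_add[OF E D']])
    show "\<forall>\<^sub>F n in sequentially. I \<le> L1dist T (resc (r (\<phi> n)) H) (\<lambda>_. cmat M) + L1dist T (resc (r (\<phi> n)) H) G"
      using rp
    proof eventually_elim
      case (elim n)
      show ?case unfolding I_def L1dist_def
        by (rule set_int_tri[OF SI_resc[OF H elim T] SI_const[OF T] SG])
    qed
  qed auto
  moreover have "0 \<le> I" unfolding I_def by (rule set_int_nonneg_l1)
  ultimately have I0: "I = 0" by simp
  have int: "integrable lborel (\<lambda>t. indicator {0<..<T} t *\<^sub>R l1norm (cmat M - G t))"
    using SI_l1_diff[OF SI_const[OF T] SG] unfolding set_integrable_def .
  have "AE t in lborel. indicator {0<..<T} t *\<^sub>R l1norm (cmat M - G t) = 0"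
    using I0 integral_nonneg_eq_0_iff_AE[OF int] unfolding I_def set_lebesgue_integral_def
    by (auto simp: indicator_def l1norm_nonneg)
  then have ae: "AE t in lborel. t \<in> {0<..<T} \<longrightarrow> G t = cmat M"
    by eventually_elim (auto simp: indicator_def dest!: l1norm_eq0)
  have "(\<lambda>n. L1dist 1 (resc (r (\<phi> n) / T) H) (\<lambda>_. cmat M)) \<longlonglongrightarrow> 0"
  proof -
    have "L1dist 1 (resc (r (\<phi> n) / T) H) (\<lambda>_. cmat M) = (1/T) * L1dist T (resc (r (\<phi> n)) H) (\<lambda>_. cmat M)" for n
      using L1dist_scale[OF T, of "r (\<phi> n) / T" H "cmat M"] T by simp
    moreover have "(\<lambda>n. (1/T) * L1dist T (resc (r (\<phi> n)) H) (\<lambda>_. cmat M)) \<longlonglongrightarrow> (1/T) * 0"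
      by (intro tendsto_intros E)
    ultimately show ?thesis by simp
  qed
  moreover have "set_integrable lborel {0<..<1::real} (\<lambda>_. cmat M)" using SI_const[of "1::real" "cmat M"] by simp
  ultimately have "(\<lambda>_. cmat M) \<in> ClL1 1 H"
    unfolding ClL1_def using filterlim_div_pos[OF rphi T]
    by (auto intro!: exI[where x="\<lambda>n. r (\<phi> n) / T"])
  then show ?thesis using M(1) ae by blast
qed



lemma mult_sgn_self: "(x::real) * sgn x = \<bar>x\<bar>"
  by (simp add: sgn_real_def abs_if)

lemma resc_Ham: assumes "H \<in> Ham" "r > 0" shows "resc r H \<in> Ham"
  unfolding Ham_def using resc_meas[OF assms(1)] Ham_resc_AE[OF assms]
  by (auto simp: ConstHamVals_def)

lemma Ham_entry_AE: assumes "G \<in> Ham" shows "AE t in lborel. 0 < t \<longrightarrow> \<bar>G t $ i $ j\<bar> \<le> 1"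
  using Ham_AE[OF assms] by eventually_elim (auto intro: CHV_entry_bound)

lemma SI_entry_mult:
  assumes G: "G \<in> Ham" and T: "T > 0" and s: "s \<in> borel_measurable lborel" and sb: "\<And>t. \<bar>s t\<bar> \<le> 1"
  shows "set_integrable lborel {0<..<T} (\<lambda>t. G t $ i $ j * s t)"
proof (rule set_integrable_bdd[where B=1, OF _ T])
  show "(\<lambda>t. G t $ i $ j * s t) \<in> borel_measurable lborel" using Ham_meas[OF G] s by measurable
  show "AE t in lborel. t \<in> {0<..<T} \<longrightarrow> norm (G t $ i $ j * s t) \<le> 1"
    using Ham_entry_AE[OF G, of i j]
  proof eventually_elim
    case (elim t)
    show ?case
    proof
      assume "t \<in> {0<..<T}"
      then have "\<bar>G t $ i $ j\<bar> \<le> 1" using elim by auto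
      then show "norm (G t $ i $ j * s t) \<le> 1"
        using sb[of t] by (simp add: abs_mult mult_le_one)
    qed
  qed
qed

lemma SI_const_mult:
  assumes T: "(T::real) > 0" and s: "s \<in> borel_measurable lborel" and sb: "\<And>t. \<bar>s t\<bar> \<le> 1"
  shows "set_integrable lborel {0<..<T} (\<lambda>t. (c::real) * s t)"
proof (rule set_integrable_bdd[where B="\<bar>c\<bar>", OF _ T])
  show "(\<lambda>t. c * s t) \<in> borel_measurable lborel" using s by measurable
  show "AE t in lborel. t \<in> {0<..<T} \<longrightarrow> norm (c * s t) \<le> \<bar>c\<bar>"
    using sb by (intro AE_I2) (simp add: abs_mult mult_left_le)
qed

lemma cmat_diff_entry: "cmod ((cmat A - cmat B) $ i $ j) = \<bar>A $ i $ j - B $ i $ j\<bar>"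
  by (simp add: cmat_def of_real_diff[symmetric] del: of_real_diff)

lemma P2T:
  assumes H: "H \<in> Ham" and dist: "(distC H \<longlongrightarrow> 0) at_top" and G: "G \<in> Ham" and T: "T > 0"
    and r: "filterlim r at_top sequentially" and W: "weak_conv_on T (\<lambda>n. resc (r n) H) G"
  shows "\<exists>M\<in>ConstHamVals. \<exists>\<phi>. strict_mono \<phi> \<and>
     (\<lambda>n. L1dist T (resc (r (\<phi> n)) H) (\<lambda>_. cmat M)) \<longlonglongrightarrow> 0 \<and>
     (AE t in lborel. t \<in> {0<..<T} \<longrightarrow> G t = M)"
proof -
  obtain M \<phi> where M: "M \<in> ConstHamVals" "strict_mono \<phi>"
    and E: "(\<lambda>n. L1dist T (resc (r (\<phi> n)) H) (\<lambda>_. cmat M)) \<longlonglongrightarrow> 0"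
    using near_const_sub[OF H dist T r] by blast
  have rphi: "filterlim (\<lambda>n. r (\<phi> n)) at_top sequentially"
    using filterlim_compose[OF r filterlim_subseq[OF M(2)]] .
  have rp: "eventually (\<lambda>n. r (\<phi> n) > 0) sequentially" using ev_pos[OF rphi] .
  have entry: "AE t in lborel. t \<in> {0<..<T} \<longrightarrow> G t $ i $ j = M $ i $ j" for i j
  proof -
    define s where "s t = sgn (G t $ i $ j - M $ i $ j)" for t
    have sm: "s \<in> borel_measurable lborel" using Ham_meas[OF G] unfolding s_def by measurable
    have sb: "\<And>t. \<bar>s t\<bar> \<le> 1" by (simp add: s_def sgn_real_def)
    define g where "g t = complex_of_real (s t)" for t
    have gm: "g \<in> borel_measurable lborel" using sm unfolding g_def by measurable
    have gb: "bounded (range g)" unfolding bounded_iff g_def using sb by (intro exI[of _ 1]) auto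
    have W1: "(\<lambda>n. LINT t:{0<..<T}|lborel. complex_of_real (resc (r n) H t $i$j) * g t)
        \<longlonglongrightarrow> (LINT t:{0<..<T}|lborel. complex_of_real (G t $i$j) * g t)"
      using W gm gb unfolding weak_conv_on_def by blast
    define a where "a n = (LINT t:{0<..<T}|lborel. resc (r n) H t $i$j * s t)" for n
    define b where "b = (LINT t:{0<..<T}|lborel. G t $i$j * s t)"
    define cc where "cc = (LINT t:{0<..<T}|lborel. M $i$j * s t)"
    have "(\<lambda>n. complex_of_real (a n)) \<longlonglongrightarrow> complex_of_real b"
      using W1 unfolding a_def b_def g_def of_real_mult[symmetric] set_integral_complex_of_real .
    then have ab: "a \<longlonglongrightarrow> b" by (simp only: tendsto_of_real_iff)
    then have ab': "(\<lambda>n. a (\<phi> n)) \<longlonglongrightarrow> b" using LIMSEQ_subseq_LIMSEQ[OF _ M(2)] by (simp add: o_def)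
    have bound: "eventually (\<lambda>n. norm (a (\<phi> n) - cc) \<le> L1dist T (resc (r (\<phi> n)) H) (\<lambda>_. cmat M)) sequentially"
      using rp
    proof eventually_elim
      case (elim n)
      define H' where "H' = resc (r (\<phi> n)) H"
      have H'H: "H' \<in> Ham" unfolding H'_def using resc_Ham[OF H elim] .
      have i1: "set_integrable lborel {0<..<T} (\<lambda>t. H' t $i$j * s t)"
        using SI_entry_mult[OF H'H T sm sb] .
      have i2: "set_integrable lborel {0<..<T} (\<lambda>t. M $i$j * s t)"
        using SI_const_mult[OF T sm sb] .
      have i3: "set_integrable lborel {0<..<T} (\<lambda>t. H' t $i$j * s t - M $i$j * s t)"
        using i1 i2 by (rule set_integral_diff(1))
      have "a (\<phi> n) - cc = (LINT t:{0<..<T}|lborel. H' t $i$j * s t - M $i$j * s t)"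
        unfolding a_def cc_def H'_def[symmetric] using i1 i2 by (rule set_integral_diff(2)[symmetric])
      also have "norm \<dots> \<le> (LINT t:{0<..<T}|lborel. norm (H' t $i$j * s t - M $i$j * s t))"
        using i3 by (rule set_integral_norm_bound)
      also have "\<dots> \<le> (LINT t:{0<..<T}|lborel. l1norm (cmat (H' t) - cmat M))"
      proof (rule set_integral_mono)
        show "set_integrable lborel {0<..<T} (\<lambda>t. norm (H' t $ i $ j * s t - M $ i $ j * s t))"
          using set_integrable_abs[OF i3] by simp
        show "set_integrable lborel {0<..<T} (\<lambda>t. l1norm (cmat (H' t) - cmat M))"
          using SI_l1_diff[OF SI_resc[OF H elim T] SI_const[OF T]] unfolding H'_def .
        fix t
        have "norm (H' t $ i $ j * s t - M $ i $ j * s t) = \<bar>H' t $ i $ j - M $ i $ j\<bar> * \<bar>s t\<bar>"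
          by (simp add: left_diff_distrib[symmetric] abs_mult)
        also have "\<dots> \<le> \<bar>H' t $ i $ j - M $ i $ j\<bar>" using sb[of t] by (simp add: mult_left_le)
        also have "\<dots> = cmod ((cmat (H' t) - cmat M) $ i $ j)" by (rule cmat_diff_entry[symmetric])
        also have "\<dots> \<le> l1norm (cmat (H' t) - cmat M)" by (rule entry_le_l1norm)
        finally show "norm (H' t $ i $ j * s t - M $ i $ j * s t) \<le> l1norm (cmat (H' t) - cmat M)" .
      qed
      also have "\<dots> = L1dist T (resc (r (\<phi> n)) H) (\<lambda>_. cmat M)" unfolding L1dist_def H'_def ..
      finally show ?case .
    qed
    have "(\<lambda>n. a (\<phi> n) - cc) \<longlonglongrightarrow> 0" using Lim_null_comparison[OF bound E] .
    then have "(\<lambda>n. a (\<phi> n)) \<longlonglongrightarrow> cc" by (simp only: LIM_zero_iff)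
    then have bc: "b = cc" using ab' LIMSEQ_unique by blast
    have j1: "set_integrable lborel {0<..<T} (\<lambda>t. G t $i$j * s t)" using SI_entry_mult[OF G T sm sb] .
    have j2: "set_integrable lborel {0<..<T} (\<lambda>t. M $i$j * s t)" using SI_const_mult[OF T sm sb] .
    have "(LINT t:{0<..<T}|lborel. G t $i$j * s t - M $i$j * s t) = 0"
      using set_integral_diff(2)[OF j1 j2] bc unfolding b_def cc_def by simp
    moreover have "\<And>t. G t $i$j * s t - M $i$j * s t = \<bar>G t $i$j - M $i$j\<bar>"
      unfolding s_def by (simp add: left_diff_distrib[symmetric] mult_sgn_self)
    ultimately have z: "(LINT t:{0<..<T}|lborel. \<bar>G t $i$j - M $i$j\<bar>) = 0" by simp
    have int: "integrable lborel (\<lambda>t. indicator {0<..<T} t *\<^sub>R \<bar>G t $i$j - M $i$j\<bar>)"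
      using set_integrable_abs[OF set_integral_diff(1)[OF SI_entry_mult[OF G T, of "\<lambda>_. 1"] SI_const_mult[OF T, of "\<lambda>_. 1"]]]
      unfolding set_integrable_def by simp
    have "AE t in lborel. indicator {0<..<T} t *\<^sub>R \<bar>G t $i$j - M $i$j\<bar> = 0"
      using z integral_nonneg_eq_0_iff_AE[OF int] unfolding set_lebesgue_integral_def
      by (auto simp: indicator_def)
    then show ?thesis by eventually_elim (auto simp: indicator_def)
  qed
  have "AE t in lborel. t \<in> {0<..<T} \<longrightarrow> G t = M"
    using entry[of 1 1] entry[of 1 2] entry[of 2 1] entry[of 2 2]
    by eventually_elim (auto simp: vec_eq_iff forall_2)
  then show ?thesis using M E by blast
qed



lemma P2_fwd:
  assumes H: "H \<in> Ham" and dist: "(distC H \<longlongrightarrow> 0) at_top" and G: "G \<in> Ham" and A: "G \<in> ClA H"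
  shows "\<exists>M\<in>ConstHamVals. (\<lambda>_. cmat M) \<in> ClL1 1 H \<and> (AE t in lborel. 0 < t \<longrightarrow> G t = M)"
proof -
  obtain r where r: "filterlim r at_top sequentially" and TC: "T_conv (\<lambda>n. resc (r n) H) G"
    using A unfolding ClA_def by blast
  have W: "\<And>T. T > 0 \<Longrightarrow> weak_conv_on T (\<lambda>n. resc (r n) H) G" using TC unfolding T_conv_def by blast
  obtain M1 \<phi> where M1: "M1 \<in> ConstHamVals" "strict_mono \<phi>"
    and E1: "(\<lambda>n. L1dist 1 (resc (r (\<phi> n)) H) (\<lambda>_. cmat M1)) \<longlonglongrightarrow> 0"
    and AE1: "AE t in lborel. t \<in> {0<..<1} \<longrightarrow> G t = M1"
    using P2T[OF H dist G _ r W[of 1]] by auto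
  have rphi: "filterlim (\<lambda>n. r (\<phi> n)) at_top sequentially"
    using filterlim_compose[OF r filterlim_subseq[OF M1(2)]] .
  have s1: "set_integrable lborel {0<..<1::real} (\<lambda>_. cmat M1)" using SI_const[of "1::real" "cmat M1"] by simp
  have C1: "(\<lambda>_. cmat M1) \<in> ClL1 1 H"
    unfolding ClL1_def using s1 rphi E1 by blast
  have k: "AE t in lborel. t \<in> {0<..<real k + 1} \<longrightarrow> G t = M1" for k :: nat
  proof -
    have Tk: "real k + 1 > 0" by simp
    obtain Mk where AEk: "AE t in lborel. t \<in> {0<..<real k + 1} \<longrightarrow> G t = Mk"
      using P2T[OF H dist G Tk r W[OF Tk]] by blast
    have "Mk = M1"
    proof (rule ccontr)
      assume ne: "Mk \<noteq> M1"
      have "AE t in lborel. t \<notin> {0<..<1::real}"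
        using AE1 AEk by eventually_elim (use ne in auto)
      then have "{0<..<1::real} \<in> null_sets lborel" by (subst AE_iff_null_sets) auto
      then show False by (simp add: null_sets_def)
    qed
    then show ?thesis using AEk by simp
  qed
  have "AE t in lborel. \<forall>k::nat. t \<in> {0<..<real k + 1} \<longrightarrow> G t = M1"
    using k by (subst AE_all_countable) auto
  then have "AE t in lborel. 0 < t \<longrightarrow> G t = M1"
  proof eventually_elim
    case (elim t)
    show ?case
    proof
      assume t: "0 < t"
      have "t < real (nat \<lceil>t\<rceil>) + 1" by linarith
      then show "G t = M1" using elim[rule_format, of "nat \<lceil>t\<rceil>"] t by auto
    qed
  qed
  then show ?thesis using M1(1) C1 by blast
qed

lemma LT:
  assumes H: "H \<in> Ham" and dist: "(distC H \<longlongrightarrow> 0) at_top" and r: "filterlim r at_top sequentially"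
    and D1: "(\<lambda>n. L1dist 1 (resc (r n) H) (\<lambda>_. c)) \<longlonglongrightarrow> 0" and T: "T > 0"
    and c: "c = cmat C"
  shows "(\<lambda>n. L1dist T (resc (r n) H) (\<lambda>_. c)) \<longlonglongrightarrow> 0"
proof -
  obtain X where X: "\<And>n. X n \<in> ConstHamVals" and E: "(\<lambda>n. L1dist T (resc (r n) H) (\<lambda>_. cmat (X n))) \<longlonglongrightarrow> 0"
    using near_const[OF dist T r] by blast
  define S where "S = min T 1"
  have S: "0 < S" "S \<le> T" "S \<le> 1" using T by (auto simp: S_def)
  have rp: "eventually (\<lambda>n. r n > 0) sequentially" using ev_pos[OF r] .
  have b1: "eventually (\<lambda>n. l1norm (cmat (X n) - c) \<le> (L1dist T (resc (r n) H) (\<lambda>_. cmat (X n)) + L1dist 1 (resc (r n) H) (\<lambda>_. c)) / S) sequentially"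
    using rp
  proof eventually_elim
    case (elim n)
    have iT: "set_integrable lborel {0<..<T} (\<lambda>t. cmat (resc (r n) H t) - cmat (X n))"
      by (intro set_integral_diff(1) SI_resc[OF H elim T] SI_const[OF T])
    have i1: "set_integrable lborel {0<..<1} (\<lambda>t. cmat (resc (r n) H t) - c)"
      by (intro set_integral_diff(1) SI_resc[OF H elim] SI_const) auto
    have "S * l1norm (cmat (X n) - c) = (LINT t:{0<..<S}|lborel. l1norm (cmat (X n) - c))"
      using set_int_const_l1[OF S(1)] by simp
    also have "\<dots> \<le> (LINT t:{0<..<S}|lborel. l1norm (cmat (resc (r n) H t) - cmat (X n))) +
        (LINT t:{0<..<S}|lborel. l1norm (cmat (resc (r n) H t) - c))"
      by (rule set_int_tri[OF SI_resc[OF H elim S(1)] SI_const[OF S(1)] SI_const[OF S(1)]])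
    also have "\<dots> \<le> L1dist T (resc (r n) H) (\<lambda>_. cmat (X n)) + L1dist 1 (resc (r n) H) (\<lambda>_. c)"
      unfolding L1dist_def
      by (intro add_mono set_int_mono_dom[OF iT S(1,2)] set_int_mono_dom[OF i1 S(1,3)])
    finally show ?case using S(1) by (simp add: pos_le_divide_eq mult.commute)
  qed
  have "(\<lambda>n. (L1dist T (resc (r n) H) (\<lambda>_. cmat (X n)) + L1dist 1 (resc (r n) H) (\<lambda>_. c)) / S) \<longlonglongrightarrow> (0 + 0) / S"
    by (intro tendsto_intros E D1) (use S in simp)
  then have lim0: "(\<lambda>n. (L1dist T (resc (r n) H) (\<lambda>_. cmat (X n)) + L1dist 1 (resc (r n) H) (\<lambda>_. c)) / S) \<longlonglongrightarrow> 0"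
    by simp
  have bl: "(\<lambda>n. l1norm (cmat (X n) - c)) \<longlonglongrightarrow> 0"
  proof (rule tendsto_sandwich[OF _ b1])
    show "\<forall>\<^sub>F n in sequentially. 0 \<le> l1norm (cmat (X n) - c)" by (simp add: l1norm_nonneg)
  qed (use lim0 in auto)
  show ?thesis
  proof (rule tendsto_sandwich[where f="\<lambda>_. 0" and h="\<lambda>n. L1dist T (resc (r n) H) (\<lambda>_. cmat (X n)) + T * l1norm (cmat (X n) - cmat C)"])
    show "\<forall>\<^sub>F n in sequentially. 0 \<le> L1dist T (resc (r n) H) (\<lambda>_. c)" by (simp add: L1dist_nonneg)
    show "\<forall>\<^sub>F n in sequentially. L1dist T (resc (r n) H) (\<lambda>_. c) \<le> L1dist T (resc (r n) H) (\<lambda>_. cmat (X n)) + T * l1norm (cmat (X n) - cmat C)"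
      using rp unfolding c by eventually_elim (rule L1dist_transfer[OF H T])
    have "(\<lambda>n. L1dist T (resc (r n) H) (\<lambda>_. cmat (X n)) + T * l1norm (cmat (X n) - cmat C)) \<longlonglongrightarrow> 0 + T * 0"
      using bl unfolding c by (intro tendsto_intros E)
    then show "(\<lambda>n. L1dist T (resc (r n) H) (\<lambda>_. cmat (X n)) + T * l1norm (cmat (X n) - cmat C)) \<longlonglongrightarrow> 0" by simp
  qed simp
qed

lemma P2_bwd:
  assumes H: "H \<in> Ham" and dist: "(distC H \<longlongrightarrow> 0) at_top" and G: "G \<in> Ham"
    and c1: "(\<lambda>_. cmat C) \<in> ClL1 1 H" and ae: "AE t in lborel. 0 < t \<longrightarrow> G t = C"
  shows "G \<in> ClA H"
proof -
  obtain r where r: "filterlim r at_top sequentially"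
    and D1: "(\<lambda>n. L1dist 1 (resc (r n) H) (\<lambda>_. cmat C)) \<longlonglongrightarrow> 0"
    using c1 unfolding ClL1_def by blast
  have rp: "eventually (\<lambda>n. r n > 0) sequentially" using ev_pos[OF r] .
  have "weak_conv_on T (\<lambda>n. resc (r n) H) G" if T: "T > 0" for T
    unfolding weak_conv_on_def
  proof (intro allI impI)
    fix g :: "real \<Rightarrow> complex" and i j
    assume g: "g \<in> borel_measurable lborel \<and> bounded (range g)"
    then obtain B0 where B0: "\<And>t. norm (g t) \<le> B0" unfolding bounded_iff by blast
    define B where "B = max B0 1"
    have B: "\<And>t. norm (g t) \<le> B" "B > 0" using B0 by (auto simp: B_def intro: le_max_iff_disj[THEN iffD2])
    have gm: "g \<in> borel_measurable lborel" using g by simp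
    have LTT: "(\<lambda>n. L1dist T (resc (r n) H) (\<lambda>_. cmat C)) \<longlonglongrightarrow> 0"
      using LT[OF H dist r D1 T refl] .
    define cc where "cc = (LINT t:{0<..<T}|lborel. complex_of_real (C $i$j) * g t)"
    have rhs: "(LINT t:{0<..<T}|lborel. complex_of_real (G t $i$j) * g t) = cc"
      unfolding cc_def
    proof (rule set_lebesgue_integral_cong_AE)
      show "(\<lambda>t. complex_of_real (G t $ i $ j) * g t) \<in> borel_measurable lborel"
        using Ham_meas[OF G] gm by measurable
      show "AE t\<in>{0<..<T} in lborel. complex_of_real (G t $ i $ j) * g t = complex_of_real (C $ i $ j) * g t"
        using ae by eventually_elim auto
    qed (use gm in auto)
    have ic: "set_integrable lborel {0<..<T} (\<lambda>t. complex_of_real (C $i$j) * g t)"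
      by (rule set_integrable_bdd[where B="\<bar>C$i$j\<bar> * B", OF _ T])
         (use gm B in \<open>auto intro!: AE_I2 mult_left_mono simp: norm_mult\<close>)
    have bound: "eventually (\<lambda>n. norm ((LINT t:{0<..<T}|lborel. complex_of_real (resc (r n) H t $i$j) * g t) - cc)
         \<le> B * L1dist T (resc (r n) H) (\<lambda>_. cmat C)) sequentially"
      using rp
    proof eventually_elim
      case (elim n)
      define H' where "H' = resc (r n) H"
      have H'H: "H' \<in> Ham" unfolding H'_def using resc_Ham[OF H elim] .
      have ih: "set_integrable lborel {0<..<T} (\<lambda>t. complex_of_real (H' t $i$j) * g t)"
      proof (rule set_integrable_bdd[where B="B", OF _ T])
        show "(\<lambda>t. complex_of_real (H' t $ i $ j) * g t) \<in> borel_measurable lborel"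
          using Ham_meas[OF H'H] gm by measurable
        show "AE t in lborel. t \<in> {0<..<T} \<longrightarrow> norm (complex_of_real (H' t $ i $ j) * g t) \<le> B"
          using Ham_entry_AE[OF H'H, of i j]
        proof eventually_elim
          case (elim t)
          show ?case
          proof
            assume "t \<in> {0<..<T}"
            then have "\<bar>H' t $ i $ j\<bar> \<le> 1" using elim by auto
            then have "\<bar>H' t $ i $ j\<bar> * norm (g t) \<le> 1 * B"
              using B by (intro mult_mono) auto
            then show "norm (complex_of_real (H' t $ i $ j) * g t) \<le> B" by (simp add: norm_mult)
          qed
        qed
      qed
      have id: "set_integrable lborel {0<..<T} (\<lambda>t. complex_of_real (H' t $i$j) * g t - complex_of_real (C $i$j) * g t)"
        using ih ic by (rule set_integral_diff(1))
      have "(LINT t:{0<..<T}|lborel. complex_of_real (H' t $i$j) * g t) - cc =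
          (LINT t:{0<..<T}|lborel. complex_of_real (H' t $i$j) * g t - complex_of_real (C $i$j) * g t)"
        unfolding cc_def using ih ic by (rule set_integral_diff(2)[symmetric])
      also have "norm \<dots> \<le> (LINT t:{0<..<T}|lborel. norm (complex_of_real (H' t $i$j) * g t - complex_of_real (C $i$j) * g t))"
        using id by (rule set_integral_norm_bound)
      also have "\<dots> \<le> (LINT t:{0<..<T}|lborel. B * l1norm (cmat (H' t) - cmat C))"
      proof (rule set_integral_mono)
        show "set_integrable lborel {0<..<T} (\<lambda>t. norm (complex_of_real (H' t $i$j) * g t - complex_of_real (C $i$j) * g t))"
          using id by (rule set_integrable_norm)
        show "set_integrable lborel {0<..<T} (\<lambda>t. B * l1norm (cmat (H' t) - cmat C))"
          using SI_l1_diff[OF SI_resc[OF H elim T] SI_const[OF T]] unfolding H'_def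
          by (rule set_integrable_mult_right)
        fix t
        have "norm (complex_of_real (H' t $i$j) * g t - complex_of_real (C $i$j) * g t)
            = \<bar>H' t $i$j - C $i$j\<bar> * norm (g t)"
          by (simp add: left_diff_distrib[symmetric] norm_mult of_real_diff[symmetric] del: of_real_diff)
        also have "\<dots> \<le> l1norm (cmat (H' t) - cmat C) * B"
        proof (rule mult_mono)
          show "\<bar>H' t $i$j - C $i$j\<bar> \<le> l1norm (cmat (H' t) - cmat C)"
            using entry_le_l1norm[of "cmat (H' t) - cmat C" i j] cmat_diff_entry by simp
        qed (use B l1norm_nonneg in auto)
        finally show "norm (complex_of_real (H' t $i$j) * g t - complex_of_real (C $i$j) * g t) \<le> B * l1norm (cmat (H' t) - cmat C)"
          by (simp add: mult.commute)
      qed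
      also have "\<dots> = B * L1dist T (resc (r n) H) (\<lambda>_. cmat C)"
        unfolding L1dist_def H'_def by (rule set_integral_mult_right)
      finally show ?case unfolding H'_def .
    qed
    have "(\<lambda>n. B * L1dist T (resc (r n) H) (\<lambda>_. cmat C)) \<longlonglongrightarrow> B * 0" by (intro tendsto_intros LTT)
    then have "(\<lambda>n. (LINT t:{0<..<T}|lborel. complex_of_real (resc (r n) H t $i$j) * g t) - cc) \<longlonglongrightarrow> 0"
      using Lim_null_comparison[OF bound] by simp
    then show "(\<lambda>n. LINT t:{0<..<T}|lborel. complex_of_real (resc (r n) H t $i$j) * g t) \<longlonglongrightarrow>
        (LINT t:{0<..<T}|lborel. complex_of_real (G t $i$j) * g t)"
      unfolding rhs by (simp only: LIM_zero_iff)
  qed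
  then have "T_conv (\<lambda>n. resc (r n) H) G" unfolding T_conv_def by blast
  then show ?thesis unfolding ClA_def using G r by blast
qed


theorem mainTheorem12:
  fixes H :: "real \<Rightarrow> real^2^2"
  assumes "H \<in> Ham"
    and "(distC H \<longlongrightarrow> 0) at_top"
  defines "K \<equiv> {\<xi> \<in> ClUHP. (\<lambda>_. cmat (Theta \<xi>)) \<in> ClL1 1 H}"
  shows "(\<forall>T>0. \<forall>G. G \<in> ClL1 T H \<longleftrightarrow>
            (set_integrable lborel {0<..<T} G \<and>
             (\<exists>\<xi>\<in>K. AE t in lborel. t \<in> {0<..<T} \<longrightarrow> G t = cmat (Theta \<xi>)))) \<and>
         (\<forall>G \<in> Ham. G \<in> ClA H \<longleftrightarrow>
            (\<exists>\<xi>\<in>K. AE t in lborel. 0 < t \<longrightarrow> G t = Theta \<xi>))"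
proof -
  have P1: "G \<in> ClL1 T H \<longleftrightarrow>
            (set_integrable lborel {0<..<T} G \<and>
             (\<exists>\<xi>\<in>K. AE t in lborel. t \<in> {0<..<T} \<longrightarrow> G t = cmat (Theta \<xi>)))"
    if T: "T > 0" for T G
  proof
    assume G: "G \<in> ClL1 T H"
    obtain M where M: "M \<in> ConstHamVals" "AE t in lborel. t \<in> {0<..<T} \<longrightarrow> G t = cmat M"
      "(\<lambda>_. cmat M) \<in> ClL1 1 H"
      using P1_fwd[OF assms(1,2) T G] by blast
    obtain \<xi> where \<xi>: "\<xi> \<in> ClUHP" "Theta \<xi> = M" using Theta_surj[OF M(1)] by blast
    have "\<xi> \<in> K" unfolding K_def using \<xi> M(3) by simp
    moreover have "set_integrable lborel {0<..<T} G" using G unfolding ClL1_def by blast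
    ultimately show "set_integrable lborel {0<..<T} G \<and>
             (\<exists>\<xi>\<in>K. AE t in lborel. t \<in> {0<..<T} \<longrightarrow> G t = cmat (Theta \<xi>))"
      using M(2) \<xi>(2) by blast
  next
    assume R: "set_integrable lborel {0<..<T} G \<and>
             (\<exists>\<xi>\<in>K. AE t in lborel. t \<in> {0<..<T} \<longrightarrow> G t = cmat (Theta \<xi>))"
    then obtain \<xi> where \<xi>: "\<xi> \<in> K" "AE t in lborel. t \<in> {0<..<T} \<longrightarrow> G t = cmat (Theta \<xi>)" by blast
    have c1: "(\<lambda>_. cmat (Theta \<xi>)) \<in> ClL1 1 H" using \<xi>(1) unfolding K_def by simp
    show "G \<in> ClL1 T H" using P1_bwd[OF assms(1) T _ c1 \<xi>(2)] R by blast
  qed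
  have P2: "G \<in> ClA H \<longleftrightarrow> (\<exists>\<xi>\<in>K. AE t in lborel. 0 < t \<longrightarrow> G t = Theta \<xi>)"
    if G: "G \<in> Ham" for G
  proof
    assume A: "G \<in> ClA H"
    obtain M where M: "M \<in> ConstHamVals" "(\<lambda>_. cmat M) \<in> ClL1 1 H" "AE t in lborel. 0 < t \<longrightarrow> G t = M"
      using P2_fwd[OF assms(1,2) G A] by blast
    obtain \<xi> where \<xi>: "\<xi> \<in> ClUHP" "Theta \<xi> = M" using Theta_surj[OF M(1)] by blast
    have "\<xi> \<in> K" unfolding K_def using \<xi> M(2) by simp
    then show "\<exists>\<xi>\<in>K. AE t in lborel. 0 < t \<longrightarrow> G t = Theta \<xi>" using M(3) \<xi>(2) by blast
  next
    assume "\<exists>\<xi>\<in>K. AE t in lborel. 0 < t \<longrightarrow> G t = Theta \<xi>"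
    then obtain \<xi> where \<xi>: "\<xi> \<in> K" "AE t in lborel. 0 < t \<longrightarrow> G t = Theta \<xi>" by blast
    have c1: "(\<lambda>_. cmat (Theta \<xi>)) \<in> ClL1 1 H" using \<xi>(1) unfolding K_def by simp
    show "G \<in> ClA H" using P2_bwd[OF assms(1,2) G c1 \<xi>(2)] .
  qed
  show ?thesis
  proof (intro conjI allI impI ballI)
    fix T :: real and G :: "real \<Rightarrow> complex^2^2" assume "T > 0"
    then show "G \<in> ClL1 T H \<longleftrightarrow>
            (set_integrable lborel {0<..<T} G \<and>
             (\<exists>\<xi>\<in>K. AE t in lborel. t \<in> {0<..<T} \<longrightarrow> G t = cmat (Theta \<xi>)))"
      by (rule P1)
  next
    fix G assume "G \<in> Ham"
    then show "G \<in> ClA H \<longleftrightarrow> (\<exists>\<xi>\<in>K. AE t in lborel. 0 < t \<longrightarrow> G t = Theta \<xi>)"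
      by (rule P2)
  qed
qed

end
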